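(* Let $L\ge1$, $M\ge2$, $\lambda>0$, $\tilde d_{\min}>0$, let ${\bm\kappa}_k=(\Phi_k,\Psi_k,\Theta_k)^T$ and ${\bm\kappa}_{k'}=(\Phi_{k'},\Psi_{k'},\Theta_{k'})^T$ be unit vectors in $\mathbb{R}^3$ with $\Delta\Phi_{k,k'}:=\Phi_k-\Phi_{k'}\neq0$, and let ${\bf q}_1,\dots,{\bf q}_L\in\mathbb{R}^3$ be arbitrary. For real antenna offsets $b_{l,m}$ ($1\le l\le L$, $1\le m\le M$) define $$\xi=\frac{1}{L^2M^2}\Big|\sum_{l=1}^L e^{\,\mathrm{j}\frac{2\pi}{\lambda}({\bm\kappa}_k-{\bm\kappa}_{k'})^T{\bf q}_l}\sum_{m=1}^M e^{\,\mathrm{j}\frac{2\pi}{\lambda}b_{l,m}\Delta\Phi_{k,k'}}\Big|^2.$$ Let $\tilde\nu_{\min}=\lceil M\tilde d_{\min}|\Delta\Phi_{k,k'}|/\lambda-1\rceil$, let $\zeta^\star=\tilde\nu_{\min}/M$ if $\mathrm{mod}(\tilde\nu_{\min}+1,M)\neq0$ and $\zeta^\star=(\tilde\nu_{\min}+1)/M$ otherwise, and set $$b_{l,m}=(m-1)\frac{(\zeta^\star+1/M)\lambda}{|\Delta\Phi_{k,k'}|}\quad\text{for all } l,m.$$ Then $\sum_{m=1}^M e^{\mathrm{j}\frac{2\pi}{\lambda}b_{l,m}\Delta\Phi_{k,k'}}=0$ for every $l$, hence $\xi=0$ regardless of ${\bf q}_1,\dots,{\bf q}_L$; moreover $b_{l,1}=0$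 and $|b_{l,m}-b_{l,m'}|\ge\tilde d_{\min}$ for all $l$ and all $m\neq m'$.
   Context: $\mathrm{j}$ is the imaginary unit, $\lceil\cdot\rceil$ the ceiling, and $\mathrm{mod}(a,b)$ the remainder of integer $a$ divided by $b$. Each of $L$ UAVs carries a linear movable-antenna array of $M$ antennas at offsets $b_{l,m}$ along the $x$-axis from the UAV's reference point ${\bf q}_l$; $\tilde d_{\min}$ is the minimum inter-antenna spacing (mutual-coupling avoidance). $\xi$ is the squared correlation coefficient of two users' far-field channels. *)

theory Defs
  imports "HOL-Analysis.Analysis"
begin

text \<open>Directions are vectors in R^3 with components (Phi, Psi, Theta) = (x $ 1, x $ 2, x $ 3).
  UAV l (1 \<le> l \<le> L) sits at q l; antenna m (1 \<le> m \<le> M) of UAV l has offset b l m.\<close>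
definition xi :: "nat \<Rightarrow> nat \<Rightarrow> real \<Rightarrow> real^3 \<Rightarrow> real^3 \<Rightarrow> (nat \<Rightarrow> real^3)
                   \<Rightarrow> (nat \<Rightarrow> nat \<Rightarrow> real) \<Rightarrow> real" where
  "xi L M lam kk kk' q b =
     (1 / (real L ^ 2 * real M ^ 2)) *
     (cmod (\<Sum>l=1..L. exp (\<i> * complex_of_real (2 * pi / lam * ((kk - kk') \<bullet> q l))) *
               (\<Sum>m=1..M. exp (\<i> * complex_of_real (2 * pi / lam * b l m * (kk $ 1 - kk' $ 1)))))) ^ 2"

definition nu_min :: "nat \<Rightarrow> real \<Rightarrow> real \<Rightarrow> real \<Rightarrow> int" where
  "nu_min M dmin lam dPhi = \<lceil>real M * dmin * \<bar>dPhi\<bar> / lam - 1\<rceil>"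

definition zeta_star :: "nat \<Rightarrow> real \<Rightarrow> real \<Rightarrow> real \<Rightarrow> real" where
  "zeta_star M dmin lam dPhi =
     (let \<nu> = nu_min M dmin lam dPhi in
      if (\<nu> + 1) mod int M \<noteq> 0 then real_of_int \<nu> / real M
      else real_of_int (\<nu> + 1) / real M)"

definition b_opt :: "nat \<Rightarrow> real \<Rightarrow> real \<Rightarrow> real \<Rightarrow> nat \<Rightarrow> nat \<Rightarrow> real" where
  "b_opt M dmin lam dPhi l m =
     (real m - 1) * ((zeta_star M dmin lam dPhi + 1 / real M) * lam / \<bar>dPhi\<bar>)"

end

theory Submission
  imports Defs
begin

lemma geo_zero:
  fixes M :: nat and K :: int
  assumes "M \<ge> 1" and "\<not> int M dvd K"
  shows "(\<Sum>m=1..M. exp (\<i> * complex_of_real (2 * pi * (real m - 1) * real_of_int K / real M))) = 0"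
proof -
  define z where "z = exp (\<i> * complex_of_real (2 * pi * real_of_int K / real M))"
  have e: "exp (\<i> * complex_of_real (2 * pi * (real m - 1) * real_of_int K / real M)) = z ^ (m - 1)"
    if "m \<ge> 1" for m
  proof -
    have "\<i> * complex_of_real (2 * pi * (real m - 1) * real_of_int K / real M)
        = of_nat (m - 1) * (\<i> * complex_of_real (2 * pi * real_of_int K / real M))"
      using that by (simp add: of_nat_diff)
    thus ?thesis unfolding z_def by (metis exp_of_nat_mult)
  qed
  have "(\<Sum>m=1..M. exp (\<i> * complex_of_real (2 * pi * (real m - 1) * real_of_int K / real M)))
      = (\<Sum>m=1..M. z ^ (m - 1))" proof (rule sum.cong[OF refl])
    fix m assume "m \<in> {1..M}"
    hence "m \<ge> 1" by simp
    thus "exp (\<i> * complex_of_real (2 * pi * (real m - 1) * real_of_int K / real M)) = z ^ (m - 1)"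
      by (rule e)
  qed
  also have "\<dots> = (\<Sum>k<M. z ^ k)"
    unfolding One_nat_def sum.atLeast1_atMost_eq by simp
  also have "\<dots> = 0"
  proof -
    have Mpos: "real M > 0" using assms by simp
    have zM: "z ^ M = 1"
    proof -
      have "z ^ M = exp (of_nat M * (\<i> * complex_of_real (2 * pi * real_of_int K / real M)))"
        unfolding z_def by (metis exp_of_nat_mult)
      also have "of_nat M * (\<i> * complex_of_real (2 * pi * real_of_int K / real M)) = 2 * pi * \<i> * of_int K"
        using Mpos by (simp add: field_simps)
      also have "exp \<dots> = 1" by (simp add: exp_eq_1)
      finally show ?thesis .
    qed
    have z1: "z \<noteq> 1"
    proof
      assume "z = 1"
      then obtain n :: int where n: "2 * pi * real_of_int K / real M = 2 * pi * real_of_int n"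
        by (auto simp: z_def exp_eq_1)
      hence "real_of_int K = real_of_int n * real M" using Mpos by (simp add: field_simps)
      hence "K = n * int M" by (metis of_int_eq_iff of_int_mult of_int_of_nat_eq)
      thus False using assms(2) by simp
    qed
    show ?thesis using z1 zM by (simp add: geometric_sum)
  qed
  finally show ?thesis .
qed

theorem mainTheorem3:
  fixes L M :: nat and lam dmin :: real and kk kk' :: "real^3"
    and q :: "nat \<Rightarrow> real^3"
  assumes "L \<ge> 1" and "M \<ge> 2" and "lam > 0" and "dmin > 0"
    and "norm kk = 1" and "norm kk' = 1" and "kk $ 1 - kk' $ 1 \<noteq> 0"
  defines "b \<equiv> b_opt M dmin lam (kk $ 1 - kk' $ 1)"
  shows "(\<forall>l\<in>{1..L}. (\<Sum>m=1..M. exp (\<i> * complex_of_real (2 * pi / lam * b l m * (kk $ 1 - kk' $ 1)))) = 0)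
       \<and> xi L M lam kk kk' q b = 0
       \<and> (\<forall>l\<in>{1..L}. b l 1 = 0)
       \<and> (\<forall>l\<in>{1..L}. \<forall>m\<in>{1..M}. \<forall>m'\<in>{1..M}. m \<noteq> m' \<longrightarrow> \<bar>b l m - b l m'\<bar> \<ge> dmin)"
proof -
  define D where "D = kk $ 1 - kk' $ 1"
  have D0: "D \<noteq> 0" "\<bar>D\<bar> > 0" using assms(7) by (auto simp: D_def)
  define x where "x = real M * dmin * \<bar>D\<bar> / lam"
  define \<nu> where "\<nu> = nu_min M dmin lam D"
  have xpos: "x > 0" using assms D0 by (simp add: x_def)
  have nux: "real_of_int \<nu> + 1 \<ge> x" unfolding \<nu>_def nu_min_def x_def
    by linarith
  have Mpos: "real M > 0" using assms by simp
  obtain N :: int where N: "real_of_int N = real M * zeta_star M dmin lam D + 1"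
    "\<not> int M dvd N" "real_of_int N \<ge> x"
  proof (cases "(\<nu> + 1) mod int M \<noteq> 0")
    case True
    show ?thesis
      apply (rule that[of "\<nu> + 1"])
      using True Mpos nux by (auto simp: zeta_star_def \<nu>_def[symmetric] Let_def dvd_eq_mod_eq_0)
  next
    case False
    have "(\<nu> + 2) mod int M = 1"
    proof -
      have "(\<nu> + 2) mod int M = ((\<nu> + 1) mod int M + 1) mod int M" by (simp add: mod_add_left_eq add.assoc)
      also have "\<dots> = 1" using False assms(2) by simp
      finally show ?thesis .
    qed
    hence "\<not> int M dvd (\<nu> + 2)" by (auto simp: dvd_eq_mod_eq_0)
    thus ?thesis
      apply (intro that[of "\<nu> + 2"])
      using False Mpos nux by (auto simp: zeta_star_def \<nu>_def[symmetric] Let_def)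
  qed
  define c where "c = real_of_int N * lam / (real M * \<bar>D\<bar>)"
  have bc: "b l m = (real m - 1) * c" for l m
    unfolding b_def D_def[symmetric] b_opt_def c_def N(1) using Mpos D0
    by (simp add: field_simps)
  have cge: "c \<ge> dmin"
  proof -
    have "dmin = x * lam / (real M * \<bar>D\<bar>)" using Mpos D0 assms(3) by (simp add: x_def field_simps)
    also have "\<dots> \<le> c" unfolding c_def using N(3) Mpos D0 assms(3)
      by (intro divide_right_mono mult_right_mono) auto
    finally show ?thesis .
  qed
  define s :: int where "s = (if D > 0 then 1 else -1)"
  have sD: "D / \<bar>D\<bar> = real_of_int s" using D0 by (auto simp: s_def)
  have ndvd: "\<not> int M dvd (s * N)" using N(2) by (auto simp: s_def)
  have S: "(\<Sum>m=1..M. exp (\<i> * complex_of_real (2 * pi / lam * b l m * D))) = 0" for l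
  proof -
    have ph: "2 * pi / lam * b l m * D = 2 * pi * (real m - 1) * real_of_int (s * N) / real M" for m
    proof -
      have "2 * pi / lam * b l m * D = 2 * pi * (real m - 1) * real_of_int N / real M * (D / \<bar>D\<bar>)"
        unfolding bc c_def using assms(3) Mpos D0 by (simp add: field_simps)
      thus ?thesis by (simp add: sD)
    qed
    show ?thesis unfolding ph using geo_zero[of M "s * N"] ndvd assms(2) by simp
  qed
  have A: "\<forall>l\<in>{1..L}. (\<Sum>m=1..M. exp (\<i> * complex_of_real (2 * pi / lam * b l m * (kk $ 1 - kk' $ 1)))) = 0"
    using S by (simp add: D_def)
  have B: "xi L M lam kk kk' q b = 0"
    unfolding xi_def using S by (simp add: D_def)
  have C: "\<forall>l\<in>{1..L}. b l 1 = 0" by (simp add: bc)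
  have E: "\<bar>b l m - b l m'\<bar> \<ge> dmin" if "m \<noteq> m'" for l m m'
  proof -
    have "\<bar>b l m - b l m'\<bar> = \<bar>real m - real m'\<bar> * c" using cge assms(4)
      by (simp add: bc abs_mult left_diff_distrib[symmetric])
    moreover have "\<bar>real m - real m'\<bar> \<ge> 1" using that by linarith
    ultimately show ?thesis using cge assms(4)
      by (metis dual_order.trans less_le_not_le mult_le_cancel_right1)
  qed
  show ?thesis using A B C E by blast
qed

end
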